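(* Let $p,q,K$ be complex numbers with $p\neq0$ and $K(1+q/p)\neq1$, and set $K'=K\big(K(1+q/p)-1\big)^{-1}$. For any complex $L$ let $$\hat R(L;p,q)=\begin{pmatrix}1&0&0&0\\0&1-L&L/p&0\\0&Lq&1-Lq/p&0\\0&0&0&1\end{pmatrix},\qquad R(L;p,q)=P\hat R(L;p,q).$$ Then $R(K';p,q)$ is invertible and $$P\,R(K;p,q)\,P=\big(R(K';p,q)\big)^{-1}.$$ In particular, for $K=2p(p+q)^{-1}$ (assuming $p+q\neq0$) one has $K'=K$ and $\hat R(K;p,q)^2=I_4$.
   Context: Matrices are written in the ordered basis $e_1\otimes e_1,e_1\otimes e_2,e_2\otimes e_1,e_2\otimes e_2$ of $\mathbb{C}^2\otimes\mathbb{C}^2$; $P$ is the flip matrix, i.e. the $4\times4$ permutation matrix swapping the second and third basis vectors. The matrix $PRP$ is what the paper denotes $(21)R$. *)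

theory Defs
  imports "HOL-Analysis.Analysis"
begin

text \<open>4x4 complex matrices in the ordered basis e1e1, e1e2, e2e1, e2e2.\<close>

definition flipP :: "complex^4^4" where
  "flipP = vector [vector [1,0,0,0], vector [0,0,1,0], vector [0,1,0,0], vector [0,0,0,1]]"

definition Rhat :: "complex \<Rightarrow> complex \<Rightarrow> complex \<Rightarrow> complex^4^4" where
  "Rhat L p q = vector [vector [1, 0, 0, 0],
                        vector [0, 1 - L, L / p, 0],
                        vector [0, L * q, 1 - L * q / p, 0],
                        vector [0, 0, 0, 1]]"

definition Rmat :: "complex \<Rightarrow> complex \<Rightarrow> complex \<Rightarrow> complex^4^4" where
  "Rmat L p q = flipP ** Rhat L p q"

definition Kprime :: "complex \<Rightarrow> complex \<Rightarrow> complex \<Rightarrow> complex" where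
  "Kprime K p q = K * inverse (K * (1 + q / p) - 1)"

end

theory Submission
  imports Defs
begin

lemma vector_4 [simp]:
 "(vector [x,y,z,w] ::('a::zero)^4)$1 = x"
 "(vector [x,y,z,w] ::('a::zero)^4)$2 = y"
 "(vector [x,y,z,w] ::('a::zero)^4)$3 = z"
 "(vector [x,y,z,w] ::('a::zero)^4)$4 = w"
  unfolding vector_def by simp_all

lemma Rhat_mult:
  fixes L M p q :: complex
  assumes p: "p \<noteq> 0" and h: "L * M * (p + q) = (L + M) * p"
  shows "Rhat L p q ** Rhat M p q = mat 1"
proof -
  have e1: "(1 - L) * (1 - M) + L / p * (M * q) = 1"
    using p h by (simp add: field_simps; algebra)
  have e2: "(1 - L) * (M / p) + L / p * (1 - M * q / p) = 0"
    using p h by (simp add: field_simps; algebra)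
  have e3: "L * q * (1 - M) + (1 - L * q / p) * (M * q) = 0"
    using p h by (simp add: field_simps; algebra)
  have e4: "L * q * (M / p) + (1 - L * q / p) * (1 - M * q / p) = 1"
    using p h by (simp add: field_simps; algebra)
  show ?thesis
    unfolding Rhat_def
    by (simp add: matrix_matrix_mult_def vec_eq_iff forall_4 sum_4 mat_def e1[simplified] e2[simplified] e3[simplified] e4[simplified])
qed

lemma flip_sq: "flipP ** flipP = mat 1"
  unfolding flipP_def
  by (simp add: matrix_matrix_mult_def vec_eq_iff forall_4 sum_4 mat_def)

lemma matrix_inv_eq:
  fixes A B :: "complex^4^4"
  assumes "A ** B = mat 1" "B ** A = mat 1"
  shows "invertible A \<and> matrix_inv A = B"
proof -
  have inv: "invertible A" using assms unfolding invertible_def by blast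
  have "A ** matrix_inv A = mat 1 \<and> matrix_inv A ** A = mat 1"
    unfolding matrix_inv_def by (rule someI[of _ B]) (use assms in blast)
  hence "matrix_inv A = matrix_inv A ** (A ** B)" using assms by (simp add: matrix_mul_rid)
  also have "\<dots> = B" using \<open>_ \<and> _\<close> by (simp add: matrix_mul_assoc matrix_mul_lid)
  finally show ?thesis using inv by simp
qed

theorem mainTheorem9:
  fixes p q K :: complex
  assumes "p \<noteq> 0" and "K * (1 + q / p) \<noteq> 1"
  shows "invertible (Rmat (Kprime K p q) p q)
       \<and> flipP ** Rmat K p q ** flipP = matrix_inv (Rmat (Kprime K p q) p q)
       \<and> (p + q \<noteq> 0 \<and> K = 2 * p * inverse (p + q) \<longrightarrow>
            Kprime K p q = K \<and> Rhat K p q ** Rhat K p q = mat 1)"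
proof -
  define K' where "K' = Kprime K p q"
  have d: "K * (1 + q / p) - 1 \<noteq> 0" using assms(2) by simp
  have "K' * (K * (1 + q / p) - 1) = K" unfolding K'_def Kprime_def using d by (simp add: field_simps)
  hence "K' * (K * (p + q) - p) = K * p" using assms(1) by (simp add: field_simps)
  hence h: "K * K' * (p + q) = (K + K') * p" by algebra
  have h': "K' * K * (p + q) = (K' + K) * p" using h by algebra
  have a: "Rhat K p q ** Rhat K' p q = mat 1" by (rule Rhat_mult[OF assms(1) h])
  have b: "Rhat K' p q ** Rhat K p q = mat 1" by (rule Rhat_mult[OF assms(1) h'])
  let ?B = "flipP ** Rmat K p q ** flipP"
  have B: "?B = Rhat K p q ** flipP"
    unfolding Rmat_def
    by (metis matrix_mul_assoc flip_sq matrix_mul_lid)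
  have 1: "Rmat K' p q ** ?B = mat 1"
    unfolding B Rmat_def
    by (metis matrix_mul_assoc flip_sq b matrix_mul_lid matrix_mul_rid)
  have 2: "?B ** Rmat K' p q = mat 1"
    unfolding B Rmat_def
    by (metis matrix_mul_assoc flip_sq a matrix_mul_lid matrix_mul_rid)
  have main: "invertible (Rmat K' p q) \<and> matrix_inv (Rmat K' p q) = ?B"
    by (rule matrix_inv_eq[OF 1 2])
  have last: "Kprime K p q = K \<and> Rhat K p q ** Rhat K p q = mat 1"
    if c: "p + q \<noteq> 0" "K = 2 * p * inverse (p + q)"
  proof -
    have "K * (1 + q / p) - 1 = 1" using c assms(1) by (simp add: field_simps)
    hence kk: "Kprime K p q = K" unfolding Kprime_def by simp
    have "K * K * (p + q) = (K + K) * p" using c by (simp add: field_simps)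
    thus ?thesis using kk Rhat_mult[OF assms(1)] by blast
  qed
  show ?thesis using main last unfolding K'_def by metis
qed
end
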